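(* Consider the algorithm (Algorithm 3 of the paper) which, for any noise-free protocol of transcript length $L$ and any unknown number $T$ of adversarial bit flips, succeeds with high probability and, when successful, sends $L' = L + O\left(\sqrt{L(T+1)\log L} + T\right)$ bits. If the adversary flips $T = O(L)$ bits and the noise rate is $\epsilon = T/L'$, then this algorithm achieves a communication rate $L/L'$ of at least $1-O\left(\sqrt{\frac{\log L}{L}} + \sqrt{\epsilon \log L}\right)$.
   Context: Setting: Alice and Bob simulate a two-party protocol with transcript length $L$ (known to both) over a synchronous binary channel on which an adversary, who does not see the transmitted bits or the parties' private randomness, flips $T$ bits in total, with $T$ unknown to the parties. $L'$ denotes the total number of bits sent by the simulating algorithm; the communication rate is $L/L'$ and the (effective) noise rate is $\epsilon = T/L'$. *)

theory Defs
  imports Complex_Main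
begin

definition comm_rate :: "nat \<Rightarrow> nat \<Rightarrow> real" where
  "comm_rate L L' = real L / real L'"

definition noise_rate :: "nat \<Rightarrow> nat \<Rightarrow> real" where
  "noise_rate T L' = real T / real L'"

end

theory Submission
  imports Defs
begin

lemma key:
  fixes C :: real and L T L' :: nat
  assumes C: "C > 0" and L3: "L \<ge> 3" and L'pos: "0 < L'" and TL: "T \<le> L'"
    and bnd: "real L' \<le> real L + C * (sqrt (real L * (real T + 1) * ln (real L)) + real T)"
  shows "comm_rate L L' \<ge>
     1 - (2*C) * (sqrt (ln (real L) / real L) + sqrt (noise_rate T L' * ln (real L)))"
proof -
  define x where "x = ln (real L)"
  have x1: "x \<ge> 1" unfolding x_def
  proof -
    have "exp 1 \<le> real L" using exp_le L3 by linarith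
    then show "1 \<le> ln (real L)" using ln_ge_iff by (metis exp_gt_zero le_less_trans ln_exp ln_le_cancel_iff not_less)
  qed
  define A where "A = sqrt (x / real L)"
  define B where "B = sqrt (real T / real L' * x)"
  have A0: "A \<ge> 0" and B0: "B \<ge> 0" using x1 unfolding A_def B_def by auto
  have Lp: "real L > 0" using L3 by auto
  have L'p: "real L' > 0" using L'pos by auto
  show ?thesis
  proof (cases "L' \<le> L")
    case True
    have "comm_rate L L' \<ge> 1" unfolding comm_rate_def using True L'p by simp
    moreover have "2*C*(A+B) \<ge> 0" using C A0 B0 by simp
    ultimately show ?thesis unfolding A_def B_def x_def noise_rate_def by linarith
  next
    case False
    hence LL': "real L \<le> real L'" by simp
    have s1: "sqrt (real L * (real T + 1) * x) \<le> sqrt (real L * x) + sqrt (real L * real T * x)"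
    proof -
      have "real L * (real T + 1) * x = real L * x + real L * real T * x" by (simp add: algebra_simps)
      then show ?thesis using sqrt_add_le_add_sqrt[of "real L * x" "real L * real T * x"] x1 by simp
    qed
    have LA: "sqrt (real L * x) \<le> real L' * A"
    proof -
      have "sqrt (real L * x) = sqrt (real L ^ 2 * (x / real L))" using Lp by (simp add: power2_eq_square)
      also have "\<dots> = real L * A" unfolding A_def by (subst real_sqrt_mult) simp
      finally have "sqrt (real L * x) = real L * A" .
      also have "\<dots> \<le> real L' * A" using LL' A0 by (simp add: mult_right_mono)
      finally show ?thesis .
    qed
    have L'B: "real L' * B = sqrt (real L' * real T * x)"
    proof -
      have "real L' * B = sqrt (real L' ^ 2) * B" using L'p by simp
      also have "\<dots> = sqrt (real L' ^ 2 * (real T / real L' * x))" unfolding B_def by (subst real_sqrt_mult) simp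
      also have "real L' ^ 2 * (real T / real L' * x) = real L' * real T * x" using L'p by (simp add: power2_eq_square field_simps)
      finally show ?thesis .
    qed
    have LB: "sqrt (real L * real T * x) \<le> real L' * B"
      unfolding L'B using LL' x1 by (intro real_sqrt_le_mono mult_right_mono) auto
    have TB: "real T \<le> real L' * B"
    proof -
      have "real T ^ 2 \<le> real L' * real T * x"
      proof -
        have "real T ^ 2 = real T * real T" by (simp add: power2_eq_square)
        also have "\<dots> \<le> real L' * real T" using TL by (simp add: mult_right_mono)
        also have "\<dots> \<le> real L' * real T * x" using x1 by (simp add: mult_left_mono[of 1 x, simplified])
        finally show ?thesis .
      qed
      hence "sqrt (real T ^ 2) \<le> sqrt (real L' * real T * x)" by (rule real_sqrt_le_mono)
      thus ?thesis unfolding L'B by simp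
    qed
    have "real L' - real L \<le> C * (real L' * A + real L' * B + real L' * B)"
    proof -
      have "real L' - real L \<le> C * (sqrt (real L * (real T + 1) * x) + real T)" using bnd x_def by simp
      also have "\<dots> \<le> C * (real L' * A + real L' * B + real L' * B)"
        using s1 LA LB TB C by (intro mult_left_mono) (linarith, simp)
      finally show ?thesis .
    qed
    also have "\<dots> \<le> real L' * (2*C*(A+B))" using C A0 B0 L'p by (simp add: algebra_simps)
    finally have "real L' - real L \<le> real L' * (2*C*(A+B))" .
    hence "(real L' - real L) / real L' \<le> 2*C*(A+B)" using L'p by (simp add: divide_le_eq mult.commute)
    hence "1 - 2*C*(A+B) \<le> real L / real L'" using L'p by (simp add: diff_divide_distrib)
    then show ?thesis unfolding comm_rate_def noise_rate_def A_def B_def x_def by simp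
  qed
qed

theorem theorem7:
  fixes C c :: real
  assumes "C > 0" and "c > 0"
  shows "\<exists>C' > 0. \<exists>L0::nat. \<forall>L T L' :: nat.
           L \<ge> L0 \<and> 0 < L' \<and> T \<le> L' \<and> real T \<le> c * real L \<and>
           real L' \<le> real L + C * (sqrt (real L * (real T + 1) * ln (real L)) + real T)
           \<longrightarrow> comm_rate L L' \<ge>
               1 - C' * (sqrt (ln (real L) / real L) + sqrt (noise_rate T L' * ln (real L)))"
  using assms by (intro exI[of _ "2*C"] conjI exI[of _ 3] allI impI) (auto intro!: key)

end
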